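(* Let $e(x,y)=(\alpha x+p(y),\beta y+\eta)$, $\alpha\beta\ne0$, be an elementary map of $\mathbb C^2$ with $e\circ e=\mathrm{id}$ and $e\neq\mathrm{id}$. Then $e$ belongs to one of the following three classes: (1) $e(x,y)=(-x+p(y),\,y)$ with $p$ any polynomial; (2) $e(x,y)=(x+p(y),\,-y+\eta)$ with $p$ odd around $\eta/2$, i.e. $p(\eta-y)=-p(y)$; (3) $e(x,y)=(-x+p(y),\,-y+\eta)$ with $p$ even around $\eta/2$, i.e. $p(\eta-y)=p(y)$. Conversely every map of these forms is an involution. Moreover, if $p$ has degree $l\ge2$, then $e$ is conjugate by an element of $C_{\mathcal S}(t)$ to a map of the following normal form, respectively: (1) $(x,y)\mapsto(-x+p(y),y)$ with $p(y)=y^l+O(y^{l-2})$ (monic, with vanishing coefficient of $y^{l-1}$); (2) $(x,y)\mapsto(x+p(y),-y)$ with $p$ an odd polynomial with leading coefficient $1$; (3) $(x,y)\mapsto(-x+p(y),-y)$ with $p$ an even polynomial with leading coefficient $1$. These normal forms are unique up to replacing $p(y)$ by $\zeta\,p(y/\zeta)$, where $\zeta$ is any root of unity with $\zeta^{l-1}=1$.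
   Context: $C_{\mathcal S}(t)$ denotes the centralizer of $t(x,y)=(y,x)$ among the affine elementary maps; concretely it consists of the maps $(x,y)\mapsto(ax+b,\,ay+b)$ with $a\ne0$. Two maps $f,g$ are $C_{\mathcal S}(t)$-conjugate if $g=s f s^{-1}$ for some $s\in C_{\mathcal S}(t)$. *)

theory Defs
  imports "HOL-Computational_Algebra.Polynomial" Complex_Main
begin

type_synonym map2 = "complex \<times> complex \<Rightarrow> complex \<times> complex"

definition elementary :: "complex \<Rightarrow> complex poly \<Rightarrow> complex \<Rightarrow> complex \<Rightarrow> map2" where
  "elementary \<alpha> p \<beta> \<eta> = (\<lambda>(x, y). (\<alpha> * x + poly p y, \<beta> * y + \<eta>))"

definition CSt :: "map2 set" where
  "CSt = {s. \<exists>a b. a \<noteq> 0 \<and> s = (\<lambda>(x, y). (a * x + b, a * y + b))}"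

definition CSt_conj :: "map2 \<Rightarrow> map2 \<Rightarrow> bool" where
  "CSt_conj f g \<longleftrightarrow> (\<exists>s \<in> CSt. g = s \<circ> f \<circ> inv s)"

definition in_class :: "nat \<Rightarrow> complex \<Rightarrow> complex poly \<Rightarrow> complex \<Rightarrow> complex \<Rightarrow> bool" where
  "in_class k \<alpha> p \<beta> \<eta> \<longleftrightarrow>
     (if k = 1 then \<alpha> = -1 \<and> \<beta> = 1 \<and> \<eta> = 0
      else if k = 2 then \<alpha> = 1 \<and> \<beta> = -1 \<and> (\<forall>y. poly p (\<eta> - y) = - poly p y)
      else \<alpha> = -1 \<and> \<beta> = -1 \<and> (\<forall>y. poly p (\<eta> - y) = poly p y))"

definition nf_map :: "nat \<Rightarrow> complex poly \<Rightarrow> map2" where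
  "nf_map k q = (if k = 1 then elementary (-1) q 1 0
                 else if k = 2 then elementary 1 q (-1) 0
                 else elementary (-1) q (-1) 0)"

definition normal_poly :: "nat \<Rightarrow> complex poly \<Rightarrow> bool" where
  "normal_poly k q \<longleftrightarrow> lead_coeff q = 1 \<and>
     (if k = 1 then coeff q (degree q - 1) = 0
      else if k = 2 then (\<forall>y. poly q (- y) = - poly q y)
      else (\<forall>y. poly q (- y) = poly q y))"

end

theory Submission
  imports Defs
begin

lemma ex_root: assumes "n > 0" shows "\<exists>z::complex. z ^ n = c"
proof -
  have "(rcis (root n (cmod c)) (Arg c / real n)) ^ n = c"
    using assms by (simp add: DeMoivre2 real_root_pow_pos2 rcis_cmod_Arg)
  then show ?thesis by blast
qed

lemma coeff_shift:
  fixes p :: "complex poly"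
  shows "degree p \<ge> 1 \<Longrightarrow> coeff (p \<circ>\<^sub>p [:c, 1:]) (degree p - 1) = coeff p (degree p - 1) + of_nat (degree p) * c * lead_coeff p"
proof (induction p)
  case 0 then show ?case by simp
next
  case (pCons a p)
  show ?case
  proof (cases "degree p = 0")
    case True
    then obtain b where b: "p = [:b:]" by (metis degree_eq_zeroE)
    then show ?thesis using pCons by (cases "b = 0") (auto simp: pcompose_pCons)
  next
    case False
    have dp: "degree (pCons a p) = Suc (degree p)" using False by (cases "p = 0") auto
    have lc: "coeff (p \<circ>\<^sub>p [:c, 1:]) (degree p) = lead_coeff p"
      using lead_coeff_comp[of "[:c,1:]" p] by (simp add: degree_pcompose)
    have ih: "coeff (p \<circ>\<^sub>p [:c, 1:]) (degree p - 1) = coeff p (degree p - 1) + of_nat (degree p) * c * lead_coeff p"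
      using pCons.IH False by simp
    obtain m where m: "degree p = Suc m" using False by (cases "degree p") auto
    show ?thesis using lc ih dp m
      by (simp add: pcompose_pCons coeff_pCons algebra_simps)
  qed
qed


definition T :: "complex \<Rightarrow> complex \<Rightarrow> complex \<Rightarrow> complex poly \<Rightarrow> complex poly" where
  "T a b \<alpha> p = smult a (p \<circ>\<^sub>p [:-b/a, 1/a:]) + [:(1-\<alpha>)*b:]"

lemma poly_T: "a \<noteq> 0 \<Longrightarrow> poly (T a b \<alpha> p) y = a * poly p ((y - b)/a) + (1-\<alpha>)*b"
  by (simp add: T_def poly_pcompose diff_divide_distrib)

lemma shift_split: "(a::complex) \<noteq> 0 \<Longrightarrow> p \<circ>\<^sub>p [:-b/a, 1/a:] = (p \<circ>\<^sub>p [:-b/a, 1:]) \<circ>\<^sub>p [:0, 1/a:]"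
proof -
  have "[:-b/a, 1:] \<circ>\<^sub>p [:0, 1/a:] = [:-b/a, 1/a:]" by (simp add: pcompose_pCons)
  then show ?thesis by (metis pcompose_assoc)
qed

lemma T_props:
  assumes a: "a \<noteq> 0" and l: "degree p = l" "l \<ge> 2"
  shows "degree (T a b \<alpha> p) = l"
    and "lead_coeff (T a b \<alpha> p) = lead_coeff p * (1/a)^(l-1)"
    and "coeff (T a b \<alpha> p) (l-1) = a * (1/a)^(l-1) * (coeff p (l-1) - of_nat l * (b/a) * lead_coeff p)"
proof -
  let ?r = "p \<circ>\<^sub>p [:-b/a, 1:]"
  have dr: "degree ?r = l" using l by (simp add: degree_pcompose)
  have p0: "p \<noteq> 0" using l by auto
  have cr: "coeff ?r (l-1) = coeff p (l-1) - of_nat l * (b/a) * lead_coeff p"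
    using coeff_shift[of p "-b/a"] l by simp
  have lr: "lead_coeff ?r = lead_coeff p"
    using lead_coeff_comp[of "[:-b/a,1:]" p] by simp
  have e: "T a b \<alpha> p = smult a (?r \<circ>\<^sub>p [:0, 1/a:]) + [:(1-\<alpha>)*b:]"
    unfolding T_def using shift_split[OF a] by simp
  have ds: "degree (smult a (?r \<circ>\<^sub>p [:0, 1/a:])) = l"
    using a dr by (simp add: degree_pcompose)
  have co: "coeff (T a b \<alpha> p) n = a * ((1/a)^n * coeff ?r n)" if "n \<ge> 1" for n
    using that unfolding e by (cases n) (simp_all add: coeff_pcompose_linear)
  show d: "degree (T a b \<alpha> p) = l"
    unfolding e using ds l by (subst degree_add_eq_left) auto
  show "lead_coeff (T a b \<alpha> p) = lead_coeff p * (1/a)^(l-1)"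
    unfolding d using co[of l] l dr lr a
    by (simp add: power_diff field_simps)
  show "coeff (T a b \<alpha> p) (l-1) = a * (1/a)^(l-1) * (coeff p (l-1) - of_nat l * (b/a) * lead_coeff p)"
    using co[of "l-1"] l cr by simp
qed

lemma elem_eq_iff: "elementary \<alpha> p \<beta> \<eta> = elementary \<alpha>' p' \<beta>' \<eta>' \<longleftrightarrow> \<alpha> = \<alpha>' \<and> p = p' \<and> \<beta> = \<beta>' \<and> \<eta> = \<eta>'"
proof
  assume h: "elementary \<alpha> p \<beta> \<eta> = elementary \<alpha>' p' \<beta>' \<eta>'"
  have f: "\<alpha> * x + poly p y = \<alpha>' * x + poly p' y \<and> \<beta> * y + \<eta> = \<beta>' * y + \<eta>'" for x y
    using fun_cong[OF h, of "(x,y)"] by (simp add: elementary_def)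
  have 1: "\<eta> = \<eta>'" using f[of 0 0] by simp
  have 2: "\<beta> = \<beta>'" using f[of 0 1] 1 by simp
  have 3: "poly p y = poly p' y" for y using f[of 0 y] by simp
  have 4: "\<alpha> = \<alpha>'" using f[of 1 0] 3[of 0] by simp
  show "\<alpha> = \<alpha>' \<and> p = p' \<and> \<beta> = \<beta>' \<and> \<eta> = \<eta>'"
    using 1 2 3 4 poly_ext by blast
qed simp

lemma conj_formula:
  assumes a: "a \<noteq> 0"
  shows "(\<lambda>(x, y). (a * x + b, a * y + b)) \<circ> elementary \<alpha> p \<beta> \<eta> \<circ> inv (\<lambda>(x, y). (a * x + b, a * y + b))
     = elementary \<alpha> (T a b \<alpha> p) \<beta> (a*\<eta> + (1-\<beta>)*b)"
proof -
  have i: "inv (\<lambda>(x, y). (a * x + b, a * y + b)) = (\<lambda>(x, y). ((x - b)/a, (y-b)/a))"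
    by (rule inv_unique_comp) (use a in \<open>auto simp: fun_eq_iff field_simps\<close>)
  show ?thesis unfolding i using a
    by (auto simp: fun_eq_iff elementary_def poly_T[OF a] field_simps)
qed


lemma part1:
  assumes "\<alpha> \<noteq> 0" "\<beta> \<noteq> 0" and ee: "elementary \<alpha> p \<beta> \<eta> \<circ> elementary \<alpha> p \<beta> \<eta> = id"
    and ne: "elementary \<alpha> p \<beta> \<eta> \<noteq> id"
  shows "in_class 1 \<alpha> p \<beta> \<eta> \<or> in_class 2 \<alpha> p \<beta> \<eta> \<or> in_class 3 \<alpha> p \<beta> \<eta>"
proof -
  have f: "\<alpha> * (\<alpha> * x + poly p y) + poly p (\<beta> * y + \<eta>) = x \<and> \<beta> * (\<beta> * y + \<eta>) + \<eta> = y" for x y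
    using fun_cong[OF ee, of "(x,y)"] by (simp add: elementary_def)
  have e0: "\<beta> * \<eta> + \<eta> = 0" using f[of 0 0] by simp
  have h1: "\<eta> + (\<beta>*\<beta> + \<beta>*\<eta>) = 1" using f[of 0 1] by (simp add: algebra_simps)
  have "\<beta>*\<beta> = (\<eta> + (\<beta>*\<beta> + \<beta>*\<eta>)) - (\<beta> * \<eta> + \<eta>)" by (simp add: algebra_simps)
  then have b2: "\<beta>^2 = 1" using h1 e0 by (simp add: power2_eq_square)
  have pz: "\<alpha> * poly p y + poly p (\<beta> * y + \<eta>) = 0" for y using f[of 0 y] by simp
  have a2: "\<alpha>^2 = 1" using f[of 1 0] pz[of 0] by (simp add: algebra_simps power2_eq_square)
  have a: "\<alpha> = 1 \<or> \<alpha> = -1" using a2 by (simp add: power2_eq_1_iff)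
  have b: "\<beta> = 1 \<or> \<beta> = -1" using b2 by (simp add: power2_eq_1_iff)
  show ?thesis
  proof (cases "\<beta> = 1")
    case True
    then have "\<eta> = 0" using e0 by simp
    show ?thesis
    proof (cases "\<alpha> = 1")
      case True
      have "poly p y = 0" for y using pz[of y] \<open>\<beta> = 1\<close> \<open>\<eta> = 0\<close> True by simp
      then have "p = 0" using poly_all_0_iff_0 by blast
      then have "elementary \<alpha> p \<beta> \<eta> = id" using True \<open>\<beta> = 1\<close> \<open>\<eta> = 0\<close>
        by (auto simp: elementary_def fun_eq_iff)
      with ne show ?thesis by simp
    next
      case False
      then show ?thesis using a \<open>\<beta> = 1\<close> \<open>\<eta> = 0\<close> by (simp add: in_class_def)
    qed
  next
    case False
    then have bm: "\<beta> = -1" using b by simp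
    have "poly p (\<eta> - y) = - \<alpha> * poly p y" for y using pz[of y] bm
      by (simp add: algebra_simps eq_neg_iff_add_eq_0)
    then show ?thesis using a bm by (auto simp: in_class_def)
  qed
qed

lemma part2:
  assumes "k \<in> {1,2,3}" "in_class k \<alpha> p \<beta> \<eta>"
  shows "elementary \<alpha> p \<beta> \<eta> \<circ> elementary \<alpha> p \<beta> \<eta> = id"
proof -
  consider "k = 1" | "k = 2" | "k = 3" using assms(1) by auto
  then show ?thesis
  proof cases
    case 1 then show ?thesis using assms(2) by (auto simp: in_class_def elementary_def fun_eq_iff)
  next
    case 2
    then have h: "\<alpha> = 1" "\<beta> = -1" "\<And>y. poly p (\<eta> - y) = - poly p y" using assms(2) by (auto simp: in_class_def)
    have "poly p (\<eta> + - y) = - poly p y" for y using h(3)[of y] by simp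
    then show ?thesis using h by (auto simp: elementary_def fun_eq_iff)
  next
    case 3
    then have h: "\<alpha> = -1" "\<beta> = -1" "\<And>y. poly p (\<eta> - y) = poly p y" using assms(2) by (auto simp: in_class_def)
    have "poly p (\<eta> + - y) = poly p y" for y using h(3)[of y] by simp
    then show ?thesis using h by (auto simp: elementary_def fun_eq_iff)
  qed
qed

lemma in_CSt: "a \<noteq> 0 \<Longrightarrow> (\<lambda>(x, y). (a * x + b, a * y + b)) \<in> CSt"
  unfolding CSt_def by blast

lemma part3:
  assumes k: "k \<in> {1,2,3}" and c: "in_class k \<alpha> p \<beta> \<eta>" and l: "degree p = l" "l \<ge> 2"
  shows "\<exists>q. degree q = l \<and> normal_poly k q \<and> CSt_conj (elementary \<alpha> p \<beta> \<eta>) (nf_map k q)"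
proof -
  define c where "c = lead_coeff p"
  have c0: "c \<noteq> 0" using l by (auto simp: c_def)
  obtain a where a: "a ^ (l-1) = c" using ex_root[of "l-1" c] l by auto
  have a0: "a \<noteq> 0" using a c0 l by (cases "a = 0") (auto simp: power_0_left)
  have lc: "lead_coeff (T a b \<alpha> p) = 1" for b
    using T_props(2)[OF a0 l, of b \<alpha>] a a0 c0 by (simp add: c_def[symmetric] power_one_over)
  have conj: "CSt_conj (elementary \<alpha> p \<beta> \<eta>) (elementary \<alpha> (T a b \<alpha> p) \<beta> (a*\<eta> + (1-\<beta>)*b))" for b
    unfolding CSt_conj_def using conj_formula[OF a0, of b \<alpha> p \<beta> \<eta>] in_CSt[OF a0, of b] by metis
  consider "k = 1" | "k = 2" | "k = 3" using k by auto
  then show ?thesis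
  proof cases
    case 1
    then have h: "\<alpha> = -1" "\<beta> = 1" "\<eta> = 0" using c by (auto simp: in_class_def)
    define b where "b = a * coeff p (l-1) / (of_nat l * c)"
    have "coeff (T a b \<alpha> p) (l-1) = 0"
      using T_props(3)[OF a0 l, of b \<alpha>] a0 c0 l by (simp add: b_def c_def)
    then have "normal_poly 1 (T a b \<alpha> p)" using lc T_props(1)[OF a0 l] by (simp add: normal_poly_def)
    moreover have "nf_map 1 (T a b \<alpha> p) = elementary \<alpha> (T a b \<alpha> p) \<beta> (a*\<eta> + (1-\<beta>)*b)"
      using h by (simp add: nf_map_def)
    ultimately show ?thesis using conj[of b] T_props(1)[OF a0 l] 1 by metis
  next
    case 2
    then have h: "\<alpha> = 1" "\<beta> = -1" "\<And>y. poly p (\<eta> - y) = - poly p y" using c by (auto simp: in_class_def)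
    define b where "b = - a * \<eta> / 2"
    have "poly (T a b \<alpha> p) (-y) = - poly (T a b \<alpha> p) y" for y
    proof -
      have "(-y - b)/a = \<eta> - (y - b)/a" using a0 by (simp add: b_def field_simps)
      then show ?thesis using h(3)[of "(y-b)/a"] by (simp add: poly_T[OF a0] h)
    qed
    then have "normal_poly 2 (T a b \<alpha> p)" using lc by (simp add: normal_poly_def)
    moreover have "nf_map 2 (T a b \<alpha> p) = elementary \<alpha> (T a b \<alpha> p) \<beta> (a*\<eta> + (1-\<beta>)*b)"
      using h by (simp add: nf_map_def b_def)
    ultimately show ?thesis using conj[of b] T_props(1)[OF a0 l] 2 by metis
  next
    case 3
    then have h: "\<alpha> = -1" "\<beta> = -1" "\<And>y. poly p (\<eta> - y) = poly p y" using c by (auto simp: in_class_def)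
    define b where "b = - a * \<eta> / 2"
    have "poly (T a b \<alpha> p) (-y) = poly (T a b \<alpha> p) y" for y
    proof -
      have "(-y - b)/a = \<eta> - (y - b)/a" using a0 by (simp add: b_def field_simps)
      then show ?thesis using h(3)[of "(y-b)/a"] by (simp add: poly_T[OF a0] h)
    qed
    then have "normal_poly 3 (T a b \<alpha> p)" using lc by (simp add: normal_poly_def)
    moreover have "nf_map 3 (T a b \<alpha> p) = elementary \<alpha> (T a b \<alpha> p) \<beta> (a*\<eta> + (1-\<beta>)*b)"
      using h by (simp add: nf_map_def b_def)
    ultimately show ?thesis using conj[of b] T_props(1)[OF a0 l] 3 by metis
  qed
qed


definition alk :: "nat \<Rightarrow> complex" where "alk k = (if k = 1 then -1 else if k = 2 then 1 else -1)"
definition bek :: "nat \<Rightarrow> complex" where "bek k = (if k = 1 then 1 else -1)"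

lemma nf_elem: "nf_map k q = elementary (alk k) q (bek k) 0"
  by (simp add: nf_map_def alk_def bek_def)

lemma part4:
  assumes k: "k \<in> {1,2,3}" and j: "j \<in> {1,2,3}" and np: "normal_poly k p" and nq: "normal_poly j q"
    and l: "degree p \<ge> 2"
  shows "CSt_conj (nf_map k p) (nf_map j q) \<longleftrightarrow>
          k = j \<and> (\<exists>\<zeta>::complex. \<zeta> ^ (degree p - 1) = 1 \<and> (\<forall>y. poly q y = \<zeta> * poly p (y / \<zeta>)))"
proof
  assume "CSt_conj (nf_map k p) (nf_map j q)"
  then obtain a b where a0: "a \<noteq> 0" and e: "nf_map j q = (\<lambda>(x, y). (a * x + b, a * y + b)) \<circ> nf_map k p \<circ> inv (\<lambda>(x, y). (a * x + b, a * y + b))"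
    unfolding CSt_conj_def CSt_def by blast
  have "elementary (alk j) q (bek j) 0 = elementary (alk k) (T a b (alk k) p) (bek k) (a*0 + (1 - bek k)*b)"
    using e conj_formula[OF a0] by (simp add: nf_elem)
  then have h: "alk j = alk k" "q = T a b (alk k) p" "bek j = bek k" "(1 - bek k) * b = 0"
    unfolding elem_eq_iff by auto
  have kj: "k = j" using h(1,3) k j by (auto simp: alk_def bek_def)
  define l where "l = degree p"
  have l2: "l \<ge> 2" using l by (simp add: l_def)
  have dq: "degree q = l" using T_props(1)[OF a0 _ l2] h(2) l_def by simp
  have "lead_coeff q = lead_coeff p * (1/a)^(l-1)" using T_props(2)[OF a0 _ l2] h(2) l_def by simp
  then have al: "a ^ (l-1) = 1" using np nq by (simp add: normal_poly_def power_one_over)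
  have b0: "b = 0"
  proof (cases "k = 1")
    case True
    have "coeff q (l-1) = a * (1/a)^(l-1) * (coeff p (l-1) - of_nat l * (b/a) * lead_coeff p)"
      using T_props(3)[OF a0 _ l2] h(2) l_def by simp
    moreover have "coeff q (l-1) = 0" "coeff p (l-1) = 0" "lead_coeff p = 1"
      using np nq True kj dq l_def by (auto simp: normal_poly_def)
    ultimately show ?thesis using a0 l2 by (simp add: power_one_over)
  next
    case False
    then show ?thesis using h(4) by (simp add: bek_def)
  qed
  have "poly q y = a * poly p (y / a)" for y using h(2) b0 poly_T[OF a0] by simp
  then show "k = j \<and> (\<exists>\<zeta>::complex. \<zeta> ^ (degree p - 1) = 1 \<and> (\<forall>y. poly q y = \<zeta> * poly p (y / \<zeta>)))"
    using kj al l_def by blast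
next
  assume "k = j \<and> (\<exists>\<zeta>::complex. \<zeta> ^ (degree p - 1) = 1 \<and> (\<forall>y. poly q y = \<zeta> * poly p (y / \<zeta>)))"
  then obtain z where kj: "k = j" and z: "z ^ (degree p - 1) = 1" and pq: "\<And>y. poly q y = z * poly p (y / z)"
    by blast
  have z0: "z \<noteq> 0" using z l by (cases "z = 0") (auto simp: power_0_left)
  have "T z 0 (alk k) p = q" using pq by (intro poly_ext) (simp add: poly_T[OF z0])
  then have "(\<lambda>(x, y). (z * x + 0, z * y + 0)) \<circ> nf_map k p \<circ> inv (\<lambda>(x, y). (z * x + 0, z * y + 0)) = nf_map j q"
    using conj_formula[OF z0, of 0 "alk k" p "bek k" 0] kj by (simp add: nf_elem)
  then show "CSt_conj (nf_map k p) (nf_map j q)"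
    unfolding CSt_conj_def using in_CSt[OF z0, of 0] by metis
qed

theorem proposition3p2:
  shows
   "(\<forall>\<alpha> \<beta> \<eta> p. \<alpha> \<noteq> 0 \<and> \<beta> \<noteq> 0 \<and>
        elementary \<alpha> p \<beta> \<eta> \<circ> elementary \<alpha> p \<beta> \<eta> = id \<and> elementary \<alpha> p \<beta> \<eta> \<noteq> id
      \<longrightarrow> in_class 1 \<alpha> p \<beta> \<eta> \<or> in_class 2 \<alpha> p \<beta> \<eta> \<or> in_class 3 \<alpha> p \<beta> \<eta>)
    \<and> (\<forall>k \<in> {1, 2, 3}. \<forall>\<alpha> \<beta> \<eta> p. in_class k \<alpha> p \<beta> \<eta> \<longrightarrow>
        elementary \<alpha> p \<beta> \<eta> \<circ> elementary \<alpha> p \<beta> \<eta> = id)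
    \<and> (\<forall>k \<in> {1, 2, 3}. \<forall>\<alpha> \<beta> \<eta> p l. in_class k \<alpha> p \<beta> \<eta> \<and> degree p = l \<and> l \<ge> 2 \<longrightarrow>
        (\<exists>q. degree q = l \<and> normal_poly k q \<and> CSt_conj (elementary \<alpha> p \<beta> \<eta>) (nf_map k q)))
    \<and> (\<forall>k \<in> {1, 2, 3}. \<forall>j \<in> {1, 2, 3}. \<forall>p q.
        normal_poly k p \<and> normal_poly j q \<and> degree p \<ge> 2 \<longrightarrow>
        (CSt_conj (nf_map k p) (nf_map j q) \<longleftrightarrow>
          k = j \<and> (\<exists>\<zeta>::complex. \<zeta> ^ (degree p - 1) = 1 \<and> (\<forall>y. poly q y = \<zeta> * poly p (y / \<zeta>)))))"
proof (intro conjI)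
  show "\<forall>\<alpha> \<beta> \<eta> p. \<alpha> \<noteq> 0 \<and> \<beta> \<noteq> 0 \<and>
        elementary \<alpha> p \<beta> \<eta> \<circ> elementary \<alpha> p \<beta> \<eta> = id \<and> elementary \<alpha> p \<beta> \<eta> \<noteq> id
      \<longrightarrow> in_class 1 \<alpha> p \<beta> \<eta> \<or> in_class 2 \<alpha> p \<beta> \<eta> \<or> in_class 3 \<alpha> p \<beta> \<eta>"
    using part1 by metis
  show "\<forall>k \<in> {1, 2, 3}. \<forall>\<alpha> \<beta> \<eta> p. in_class k \<alpha> p \<beta> \<eta> \<longrightarrow>
        elementary \<alpha> p \<beta> \<eta> \<circ> elementary \<alpha> p \<beta> \<eta> = id"
    using part2 by metis
  show "\<forall>k \<in> {1, 2, 3}. \<forall>\<alpha> \<beta> \<eta> p l. in_class k \<alpha> p \<beta> \<eta> \<and> degree p = l \<and> l \<ge> 2 \<longrightarrow>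
        (\<exists>q. degree q = l \<and> normal_poly k q \<and> CSt_conj (elementary \<alpha> p \<beta> \<eta>) (nf_map k q))"
    using part3 by metis
  show "\<forall>k \<in> {1, 2, 3}. \<forall>j \<in> {1, 2, 3}. \<forall>p q.
        normal_poly k p \<and> normal_poly j q \<and> degree p \<ge> 2 \<longrightarrow>
        (CSt_conj (nf_map k p) (nf_map j q) \<longleftrightarrow>
          k = j \<and> (\<exists>\<zeta>::complex. \<zeta> ^ (degree p - 1) = 1 \<and> (\<forall>y. poly q y = \<zeta> * poly p (y / \<zeta>))))"
    using part4 by (intro ballI allI impI) (elim conjE, rule part4)
qed

end
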